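(* Let $c\in\mathbb{N}$ be a constant and let $g=(g_n)_{n\in\mathbb{N}}$, $g_n:\{0,1\}^n\to\{0,1\}^{n+c}$, be a generator. Suppose there exist a polynomial $p$, a constant $\epsilon>0$, and a strictly increasing infinite sequence $(n_i)_{i\in\mathbb{N}}\subseteq\mathbb{N}$ such that (1) $n_{i+1}\le p(n_i)$ for all $i$, and (2) for every $n\in\{n_i: i\in\mathbb{N}\}$, $H_{\mathrm{nh}}(g_n)\ge 2^{n^\epsilon}$ (respectively, $H_{\mathrm{dh}}(g_n)\ge 2^{n^\epsilon}$). Then there exists a generator $G_n:\{0,1\}^n\to\{0,1\}^{n+c}$ constructed from $g$ which is $c$ super-bits (respectively, $c$ demi-bits). Concretely, one may take $G(x)=g_{n_i}(x[1\ldots n_i])\cdot x[n_i+1\ldots n]$ for $x\in\{0,1\}^n$ with $n_i\le n<n_{i+1}$ (for $n\ge n_1$).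
   Context: A generator is a family $g_n:\{0,1\}^n\to\{0,1\}^{l(n)}$ computable by polynomial-size (nonuniform) circuits with $l(n)>n$. A nondeterministic circuit $D(x,w)$ accepts input $x$ (written $D(x)=1$) iff there is an assignment to the nondeterministic input bits $w$ with $D(x,w)=1$. The nondeterministic hardness $H_{\mathrm{nh}}(g_n)$ is the minimal $s$ such that some nondeterministic circuit $D$ of size at most $s$ satisfies $\Pr_{y\in\{0,1\}^{l(n)}}[D(y)=1]-\Pr_{x\in\{0,1\}^n}[D(g_n(x))=1]\ge 1/s$. The demi-hardness $H_{\mathrm{dh}}(g_n)$ is the minimal $s$ such that some nondeterministic circuit $D$ of size at most $s$ satisfies $\Pr_{y}[D(y)=1]\ge 1/s$ and $\Pr_x[D(g_n(x))=1]=0$. A generator $g_n:\{0,1\}^n\to\{0,1\}^{n+c}$ is $c$ super-bits (resp. $c$ demi-bits) if there is $\epsilon>0$ such that $H_{\mathrm{nh}}(g_n)\ge 2^{n^\epsilon}$ (resp. $H_{\mathrm{dh}}(g_n)\ge 2^{n^\epsilon}$) for all sufficiently large $n$. Probabilities are over the uniform distribution. $x[i\ldots j]$ denotes the substring of $x$ from position $i$ to $j$, and $\cdot$ denotes concatenation. *)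

theory Defs
  imports Complex_Main "HOL-Library.Extended_Real" "HOL-Computational_Algebra.Polynomial"
begin

text \<open>A circuit is a list of gates; gate number k may refer to input bits and to
 earlier gates (wires with index < k). References to non-existent wires/inputs
 evaluate to False.\<close>

datatype gate = Inp nat | Cst bool | Neg nat | Conj nat nat | Disj nat nat

fun gval :: "bool list \<Rightarrow> bool list \<Rightarrow> gate \<Rightarrow> bool" where
  "gval x vs (Inp i) = (i < length x \<and> x ! i)"
| "gval x vs (Cst b) = b"
| "gval x vs (Neg i) = (i < length vs \<and> \<not> vs ! i)"
| "gval x vs (Conj i j) = (i < length vs \<and> j < length vs \<and> vs ! i \<and> vs ! j)"
| "gval x vs (Disj i j) = (i < length vs \<and> j < length vs \<and> (vs ! i \<or> vs ! j))"

definition wires :: "gate list \<Rightarrow> bool list \<Rightarrow> bool list" where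
  "wires gs x = foldl (\<lambda>vs g. vs @ [gval x vs g]) [] gs"

definition circ_eval :: "gate list \<Rightarrow> bool list \<Rightarrow> bool" where
  "circ_eval gs x = (gs \<noteq> [] \<and> last (wires gs x))"

type_synonym mcirc = "gate list \<times> nat list"

definition mcirc_eval :: "mcirc \<Rightarrow> bool list \<Rightarrow> bool list" where
  "mcirc_eval C x = map (\<lambda>i. i < length (fst C) \<and> wires (fst C) x ! i) (snd C)"

definition mcirc_size :: "mcirc \<Rightarrow> nat" where
  "mcirc_size C = length (fst C)"

text \<open>Nondeterministic circuit: a circuit together with the number k of
 nondeterministic input bits; on input y it is run on y @ w.\<close>
type_synonym ndcirc = "gate list \<times> nat"

definition nd_accepts :: "ndcirc \<Rightarrow> bool list \<Rightarrow> bool" where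
  "nd_accepts D y = (\<exists>w. length w = snd D \<and> circ_eval (fst D) (y @ w))"

definition nd_size :: "ndcirc \<Rightarrow> nat" where
  "nd_size D = length (fst D)"

definition prob_bits :: "nat \<Rightarrow> (bool list \<Rightarrow> bool) \<Rightarrow> real" where
  "prob_bits m P = real (card {x :: bool list. length x = m \<and> P x}) / 2 ^ m"

section \<open>Hardness measures (minimal s; +infinity if no such s)\<close>

definition Hnh :: "(bool list \<Rightarrow> bool list) \<Rightarrow> nat \<Rightarrow> nat \<Rightarrow> ereal" where
  "Hnh f n l = Inf {ereal (real s) | s. 1 \<le> s \<and>
     (\<exists>D. nd_size D \<le> s \<and>
        prob_bits l (nd_accepts D) - prob_bits n (\<lambda>x. nd_accepts D (f x)) \<ge> 1 / real s)}"

definition Hdh :: "(bool list \<Rightarrow> bool list) \<Rightarrow> nat \<Rightarrow> nat \<Rightarrow> ereal" where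
  "Hdh f n l = Inf {ereal (real s) | s. 1 \<le> s \<and>
     (\<exists>D. nd_size D \<le> s \<and>
        prob_bits l (nd_accepts D) \<ge> 1 / real s \<and>
        prob_bits n (\<lambda>x. nd_accepts D (f x)) = 0)}"

definition is_generator :: "(nat \<Rightarrow> bool list \<Rightarrow> bool list) \<Rightarrow> (nat \<Rightarrow> nat) \<Rightarrow> bool" where
  "is_generator g l \<longleftrightarrow> (\<forall>n. n < l n) \<and>
     (\<forall>n x. length x = n \<longrightarrow> length (g n x) = l n) \<and>
     (\<exists>k. \<forall>n. \<exists>C. mcirc_size C \<le> n ^ k + k \<and>
          (\<forall>x. length x = n \<longrightarrow> mcirc_eval C x = g n x))"

definition super_bits :: "(nat \<Rightarrow> bool list \<Rightarrow> bool list) \<Rightarrow> nat \<Rightarrow> bool" where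
  "super_bits g c \<longleftrightarrow> is_generator g (\<lambda>n. n + c) \<and>
     (\<exists>\<epsilon>>0. \<exists>N. \<forall>n\<ge>N. Hnh (g n) n (n + c) \<ge> ereal (2 powr (real n powr \<epsilon>)))"

definition demi_bits :: "(nat \<Rightarrow> bool list \<Rightarrow> bool list) \<Rightarrow> nat \<Rightarrow> bool" where
  "demi_bits g c \<longleftrightarrow> is_generator g (\<lambda>n. n + c) \<and>
     (\<exists>\<epsilon>>0. \<exists>N. \<forall>n\<ge>N. Hdh (g n) n (n + c) \<ge> ereal (2 powr (real n powr \<epsilon>)))"

end

theory Submission
  imports Defs
begin

fun substg :: "(nat \<Rightarrow> gate) \<Rightarrow> gate \<Rightarrow> gate" where
  "substg f (Inp i) = f i"
| "substg f (Cst b) = Cst b"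
| "substg f (Neg i) = Neg i"
| "substg f (Conj i j) = Conj i j"
| "substg f (Disj i j) = Disj i j"

lemma gval_substg:
  assumes "\<forall>i vs. gval x' vs (f i) = gval x vs (Inp i)"
  shows "gval x' vs (substg f g) = gval x vs g"
  using assms by (cases g) auto

lemma wires_Nil[simp]: "wires [] x = []" by (simp add: wires_def)

lemma wires_snoc: "wires (gs @ [g]) x = wires gs x @ [gval x (wires gs x) g]"
  by (simp add: wires_def)

lemma wires_substg:
  assumes "\<forall>i vs. gval x' vs (f i) = gval x vs (Inp i)"
  shows "wires (map (substg f) gs) x' = wires gs x"
proof (induction gs rule: rev_induct)
  case Nil then show ?case by simp
next
  case (snoc g gs) then show ?case using gval_substg[OF assms] by (simp add: wires_snoc)
qed

lemma circ_eval_substg: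
  assumes "\<forall>i vs. gval x' vs (f i) = gval x vs (Inp i)"
  shows "circ_eval (map (substg f) gs) x' = circ_eval gs x"
  using wires_substg[OF assms, of gs] by (simp add: circ_eval_def)

lemma length_wires[simp]: "length (wires gs x) = length gs"
  by (induction gs rule: rev_induct) (auto simp: wires_snoc)

definition simpleg :: "gate \<Rightarrow> bool" where
  "simpleg h \<longleftrightarrow> (\<exists>i. h = Inp i) \<or> (\<exists>b. h = Cst b)"

lemma gval_simpleg: "simpleg h \<Longrightarrow> gval x vs h = gval x [] h"
  unfolding simpleg_def by auto

lemma foldl_indep:
  assumes "\<forall>h\<in>set hs. simpleg h"
  shows "foldl (\<lambda>vs g. vs @ [gval x vs g]) acc hs = acc @ map (gval x []) hs"
  using assms
proof (induction hs arbitrary: acc)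
  case Nil then show ?case by simp
next
  case (Cons a hs)
  have sa: "simpleg a" using Cons.prems by simp
  have sh: "\<forall>h\<in>set hs. simpleg h" using Cons.prems by simp
  have "foldl (\<lambda>vs g. vs @ [gval x vs g]) acc (a # hs) = foldl (\<lambda>vs g. vs @ [gval x vs g]) (acc @ [gval x acc a]) hs"
    by simp
  also have "\<dots> = (acc @ [gval x acc a]) @ map (gval x []) hs" by (rule Cons.IH[OF sh])
  finally show ?case using gval_simpleg[OF sa, of x acc] by simp
qed

lemma wires_append_indep:
  assumes "\<forall>h\<in>set hs. simpleg h"
  shows "wires (gs @ hs) x = wires gs x @ map (gval x []) hs"
  unfolding wires_def foldl_append by (rule foldl_indep[OF assms])

definition fz :: "nat \<Rightarrow> bool list \<Rightarrow> nat \<Rightarrow> gate" where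
  "fz l z j = (if j < l then Inp j else if j < l + length z then Cst (z ! (j - l)) else Inp (j - length z))"

lemma nd_subst:
  assumes "length y = l"
  shows "nd_accepts (map (substg (fz l z)) (fst D), snd D) y = nd_accepts D (y @ z)"
proof -
  have "circ_eval (map (substg (fz l z)) (fst D)) (y @ w) = circ_eval (fst D) ((y @ z) @ w)" for w
  proof (rule circ_eval_substg, intro allI)
    fix i vs
    show "gval (y @ w) vs (fz l z i) = gval ((y @ z) @ w) vs (Inp i)"
    proof (cases "i < l")
      case True then show ?thesis by (simp add: fz_def nth_append assms)
    next
      case F: False
      show ?thesis
      proof (cases "i < l + length z")
        case True
        have "i - l < length z" using True F by linarith
        then show ?thesis using F True by (simp add: fz_def nth_append assms)
      next
        case False
        have f: "fz l z i = Inp (i - length z)" using F False by (simp add: fz_def)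
        have le: "l \<le> i - length z" using False by linarith
        have a0: "(y @ w) ! (i - length z) = w ! (i - length z - l)"
          using le assms by (simp add: nth_append)
        have a1: "(y @ w) ! (i - length z) = w ! (i - (l + length z))"
          unfolding a0 by (simp add: add.commute)
        have le2: "length (y @ z) \<le> i" using False assms by simp
        have a2: "((y @ z) @ w) ! i = w ! (i - (l + length z))"
          using le2 assms by (simp add: nth_append del: append_assoc)
        have a3: "(i - length z < length (y @ w)) = (i < length ((y @ z) @ w))"
          using F False assms by auto
        show ?thesis unfolding f gval.simps a1 a2 a3 ..
      qed
    qed
  qed
  then show ?thesis by (simp add: nd_accepts_def)
qed

definition trc :: "nat \<Rightarrow> nat \<Rightarrow> mcirc \<Rightarrow> mcirc" where
  "trc m n C = (map (substg (\<lambda>j. if j < m then Inp j else Cst False)) (fst C) @ (Cst False # map Inp [m..<n]),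
     map (\<lambda>i. if i < length (fst C) then i else length (fst C)) (snd C) @ map (\<lambda>t. length (fst C) + 1 + t) [0..<n-m])"

lemma trc_size: "mcirc_size (trc m n C) = mcirc_size C + 1 + (n - m)"
  by (simp add: trc_def mcirc_size_def)

lemma trc_eval:
  assumes "length x = n" "m \<le> n"
  shows "mcirc_eval (trc m n C) x = mcirc_eval C (take m x) @ drop m x"
proof -
  obtain gs outs where C: "C = (gs, outs)" by (cases C)
  define T where "T = trc m n (gs, outs)"

  have w1: "wires (map (substg (\<lambda>j. if j < m then Inp j else Cst False)) gs) x = wires gs (take m x)"
    by (rule wires_substg) (use assms in auto)
  have W: "wires (fst T) x = wires gs (take m x) @ False # map (\<lambda>j. j < n \<and> x ! j) [m..<n]"
    unfolding T_def trc_def fst_conv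
    by (subst wires_append_indep) (auto simp: w1 assms simpleg_def)
  have L: "length (fst T) = length gs + 1 + (n - m)" by (simp add: T_def trc_def)
  have p1: "map (\<lambda>i. i < length (fst T) \<and> wires (fst T) x ! i)
      (map (\<lambda>i. if i < length gs then i else length gs) outs) = mcirc_eval C (take m x)"
    unfolding C mcirc_eval_def by (auto simp: L W nth_append)
  have p2: "map (\<lambda>i. i < length (fst T) \<and> wires (fst T) x ! i)
      (map (\<lambda>t. length gs + 1 + t) [0..<n-m]) = drop m x"
    by (rule nth_equalityI) (use assms in \<open>auto simp: L W nth_append\<close>)
  have S: "snd T = map (\<lambda>i. if i < length gs then i else length gs) outs @ map (\<lambda>t. length gs + 1 + t) [0..<n-m]"
    by (simp add: T_def trc_def)
  have "mcirc_eval T x = map (\<lambda>i. i < length (fst T) \<and> wires (fst T) x ! i) (snd T)"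
    by (simp add: mcirc_eval_def)
  also have "\<dots> = mcirc_eval C (take m x) @ drop m x"
    unfolding S map_append p1 p2 ..
  finally show ?thesis unfolding T_def C .
qed

lemma fin_len: "finite {xs :: bool list. length xs = n}"
  using finite_lists_length_eq[of "UNIV :: bool set" n] by simp

lemma card_len: "card {xs :: bool list. length xs = n} = 2 ^ n"
  using card_lists_length_eq[of "UNIV :: bool set" n] by simp

lemma prob_cong: "(\<And>x. length x = m \<Longrightarrow> P x = Q x) \<Longrightarrow> prob_bits m P = prob_bits m Q"
proof -
  assume h: "\<And>x. length x = m \<Longrightarrow> P x = Q x"
  have "{x. length x = m \<and> P x} = {x. length x = m \<and> Q x}" using h by auto
  then show ?thesis by (simp add: prob_bits_def)
qed

lemma prob_nonneg: "prob_bits m P \<ge> 0"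
  by (simp add: prob_bits_def)

lemma card_split:
  "card {x :: bool list. length x = l + r \<and> P x} =
     (\<Sum>z\<in>{z. length z = r}. card {y. length y = l \<and> P (y @ z)})"
proof -
  let ?A = "\<lambda>z. (\<lambda>y. y @ z) ` {y. length y = l \<and> P (y @ z)}"
  have eq: "{x :: bool list. length x = l + r \<and> P x} = (\<Union>z\<in>{z. length z = r}. ?A z)"
  proof (intro set_eqI iffI)
    fix x :: "bool list" assume "x \<in> {x. length x = l + r \<and> P x}"
    then have x: "length x = l + r" "P x" by auto
    have "x = take l x @ drop l x" by simp
    then show "x \<in> (\<Union>z\<in>{z. length z = r}. ?A z)"
      using x by (intro UN_I[of "drop l x"]) (auto intro!: image_eqI[of _ _ "take l x"])
  next
    fix x assume "x \<in> (\<Union>z\<in>{z. length z = r}. ?A z)"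
    then show "x \<in> {x. length x = l + r \<and> P x}" by auto
  qed
  have "card (\<Union>z\<in>{z. length z = r}. ?A z) = (\<Sum>z\<in>{z. length z = r}. card (?A z))"
  proof (rule card_UN_disjoint)
    show "finite {z :: bool list. length z = r}" by (rule fin_len)
    show "\<forall>z\<in>{z. length z = r}. finite (?A z)"
      using fin_len[of l] by (auto intro: finite_subset)
    show "\<forall>i\<in>{z. length z = r}. \<forall>j\<in>{z. length z = r}. i \<noteq> j \<longrightarrow> ?A i \<inter> ?A j = {}"
      by auto
  qed
  also have "\<dots> = (\<Sum>z\<in>{z. length z = r}. card {y. length y = l \<and> P (y @ z)})"
    by (intro sum.cong refl card_image) (auto simp: inj_on_def)
  finally show ?thesis using eq by simp
qed

lemma prob_split:
  "prob_bits (l + r) P = (\<Sum>z\<in>{z. length z = r}. prob_bits l (\<lambda>y. P (y @ z))) / 2 ^ r"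
proof -
  have "prob_bits (l + r) P = real (\<Sum>z\<in>{z. length z = r}. card {y. length y = l \<and> P (y @ z)}) / (2 ^ l * 2 ^ r)"
    unfolding prob_bits_def card_split by (simp add: power_add)
  also have "\<dots> = (\<Sum>z\<in>{z. length z = r}. real (card {y. length y = l \<and> P (y @ z)}) / 2 ^ l) / 2 ^ r"
    by (simp add: sum_divide_distrib)
  finally show ?thesis by (simp add: prob_bits_def)
qed

lemma avg:
  fixes a b :: "bool list \<Rightarrow> real" and s :: real
  assumes h: "(\<Sum>z\<in>{z. length z = r}. a z) / 2 ^ r - (\<Sum>z\<in>{z. length z = r}. b z) / 2 ^ r \<ge> 1 / s"
    and s: "s > 0"
  shows "\<exists>z. length z = r \<and> a z - b z \<ge> 1 / s"
proof (rule ccontr)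
  assume "\<not> ?thesis"
  then have lt: "\<forall>z\<in>{z. length z = r}. a z - b z < 1 / s" by auto
  have ne: "{z :: bool list. length z = r} \<noteq> {}" by (auto intro: exI[of _ "replicate r False"])
  have "(\<Sum>z\<in>{z. length z = r}. a z - b z) < (\<Sum>z\<in>{z :: bool list. length z = r}. 1 / s)"
    using lt by (intro sum_strict_mono fin_len ne) auto
  also have "\<dots> = 2 ^ r / s" by (simp add: card_len)
  finally have "(\<Sum>z\<in>{z. length z = r}. a z) - (\<Sum>z\<in>{z. length z = r}. b z) < 2 ^ r / s"
    by (simp add: sum_subtractf)
  then have "((\<Sum>z\<in>{z. length z = r}. a z) - (\<Sum>z\<in>{z. length z = r}. b z)) / 2 ^ r < (2 ^ r / s) / 2 ^ r"
    by (rule divide_strict_right_mono) simp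
  also have "(2 ^ r / s) / 2 ^ r = 1 / s" by simp
  finally show False using h by (simp only: diff_divide_distrib)
qed

lemma reduce_set_nh:
  fixes f :: "bool list \<Rightarrow> bool list"
  assumes fl: "\<forall>x. length x = m \<longrightarrow> length (f x) = l"
  assumes s1: "1 \<le> s" and Ds: "nd_size D \<le> s"
    and adv: "prob_bits (l + r) (nd_accepts D) - prob_bits (m + r) (\<lambda>X. nd_accepts D (f (take m X) @ drop m X)) \<ge> 1 / real s"
  shows "\<exists>D'. nd_size D' \<le> s \<and> prob_bits l (nd_accepts D') - prob_bits m (\<lambda>x. nd_accepts D' (f x)) \<ge> 1 / real s"
proof -
  define a where "a z = prob_bits l (\<lambda>y. nd_accepts D (y @ z))" for z
  define b where "b z = prob_bits m (\<lambda>x. nd_accepts D (f x @ z))" for z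
  have pa: "prob_bits (l + r) (nd_accepts D) = (\<Sum>z\<in>{z. length z = r}. a z) / 2 ^ r"
    unfolding a_def by (rule prob_split)
  have pb: "prob_bits (m + r) (\<lambda>X. nd_accepts D (f (take m X) @ drop m X)) = (\<Sum>z\<in>{z. length z = r}. b z) / 2 ^ r"
    unfolding b_def prob_split
  proof (intro arg_cong[where f="\<lambda>t. t / 2 ^ r"] sum.cong refl prob_cong)
    fix z x :: "bool list" assume "length x = m"
    then show "nd_accepts D (f (take m (x @ z)) @ drop m (x @ z)) = nd_accepts D (f x @ z)" by simp
  qed
  have h: "1 / real s \<le> (\<Sum>z\<in>{z. length z = r}. a z) / 2 ^ r - (\<Sum>z\<in>{z. length z = r}. b z) / 2 ^ r"
    using adv unfolding pa pb .
  have "\<exists>z. length z = r \<and> a z - b z \<ge> 1 / real s"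
    by (rule avg[OF h]) (use s1 in simp)
  then obtain z where z: "length z = r" "a z - b z \<ge> 1 / real s" by blast
  define D' where "D' = (map (substg (fz l z)) (fst D), snd D)"
  have ea: "a z = prob_bits l (nd_accepts D')"
    unfolding a_def D'_def by (rule prob_cong) (simp add: nd_subst)
  have eb: "b z = prob_bits m (\<lambda>x. nd_accepts D' (f x))"
    unfolding b_def D'_def by (rule prob_cong) (simp add: nd_subst fl)
  have sz: "nd_size D' \<le> s" using Ds by (simp add: D'_def nd_size_def)
  have "prob_bits l (nd_accepts D') - prob_bits m (\<lambda>x. nd_accepts D' (f x)) \<ge> 1 / real s"
    using z(2) unfolding ea eb .
  with sz show ?thesis by (intro exI[of _ D'] conjI)
qed

lemma reduce_set_dh:
  fixes f :: "bool list \<Rightarrow> bool list"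
  assumes fl: "\<forall>x. length x = m \<longrightarrow> length (f x) = l"
  assumes s1: "1 \<le> s" and Ds: "nd_size D \<le> s"
    and adv: "prob_bits (l + r) (nd_accepts D) \<ge> 1 / real s"
    and zero: "prob_bits (m + r) (\<lambda>X. nd_accepts D (f (take m X) @ drop m X)) = 0"
  shows "\<exists>D'. nd_size D' \<le> s \<and> prob_bits l (nd_accepts D') \<ge> 1 / real s \<and> prob_bits m (\<lambda>x. nd_accepts D' (f x)) = 0"
proof -
  define a where "a z = prob_bits l (\<lambda>y. nd_accepts D (y @ z))" for z
  define b where "b z = prob_bits m (\<lambda>x. nd_accepts D (f x @ z))" for z
  have pa: "prob_bits (l + r) (nd_accepts D) = (\<Sum>z\<in>{z. length z = r}. a z) / 2 ^ r"
    unfolding a_def by (rule prob_split)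
  have pb: "prob_bits (m + r) (\<lambda>X. nd_accepts D (f (take m X) @ drop m X)) = (\<Sum>z\<in>{z. length z = r}. b z) / 2 ^ r"
    unfolding b_def prob_split
  proof (intro arg_cong[where f="\<lambda>t. t / 2 ^ r"] sum.cong refl prob_cong)
    fix z x :: "bool list" assume "length x = m"
    then show "nd_accepts D (f (take m (x @ z)) @ drop m (x @ z)) = nd_accepts D (f x @ z)" by simp
  qed
  have "(\<Sum>z\<in>{z. length z = r}. b z) = 0" using zero pb by simp
  then have b0: "\<forall>z\<in>{z. length z = r}. b z = 0"
    using sum_nonneg_eq_0_iff[of "{z::bool list. length z = r}" b] fin_len[of r] by (simp add: b_def prob_nonneg)
  have h: "1 / real s \<le> (\<Sum>z\<in>{z. length z = r}. a z) / 2 ^ r - (\<Sum>z\<in>{z::bool list. length z = r}. (\<lambda>_. 0::real) z) / 2 ^ r"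
    using adv unfolding pa by simp
  have "\<exists>z. length z = r \<and> a z - (\<lambda>_. 0::real) z \<ge> 1 / real s"
    by (rule avg[OF h]) (use s1 in simp)
  then obtain z where z: "length z = r" "a z \<ge> 1 / real s" by auto
  define D' where "D' = (map (substg (fz l z)) (fst D), snd D)"
  have ea: "a z = prob_bits l (nd_accepts D')"
    unfolding a_def D'_def by (rule prob_cong) (simp add: nd_subst)
  have eb: "b z = prob_bits m (\<lambda>x. nd_accepts D' (f x))"
    unfolding b_def D'_def by (rule prob_cong) (simp add: nd_subst fl)
  have sz: "nd_size D' \<le> s" using Ds by (simp add: D'_def nd_size_def)
  have bz: "b z = 0" using b0 z(1) by simp
  have e2: "prob_bits m (\<lambda>x. nd_accepts D' (f x)) = 0" using bz unfolding eb .
  have e1: "prob_bits l (nd_accepts D') \<ge> 1 / real s" using z(2) unfolding ea .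
  show ?thesis using sz e1 e2 by (intro exI[of _ D'] conjI)
qed

lemma setcomp_mono: "(\<And>s. P s \<Longrightarrow> Q s) \<Longrightarrow> {f s |s. P s} \<subseteq> {f s |s. Q s}"
  by blast

lemma reduce_nh:
  fixes f :: "bool list \<Rightarrow> bool list"
  assumes fl: "\<forall>x. length x = m \<longrightarrow> length (f x) = l"
  shows "Hnh f m l \<le> Hnh (\<lambda>X. f (take m X) @ drop m X) (m + r) (l + r)"
  unfolding Hnh_def
proof (rule Inf_superset_mono, rule setcomp_mono, elim conjE exE, intro conjI)
  fix s D assume s1: "1 \<le> s" and D: "nd_size D \<le> s" and a: "prob_bits (l + r) (nd_accepts D) - prob_bits (m + r) (\<lambda>x. nd_accepts D (f (take m x) @ drop m x)) \<ge> 1 / real s"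
  show "1 \<le> s" by (rule s1)
  show "\<exists>D. nd_size D \<le> s \<and> prob_bits l (nd_accepts D) - prob_bits m (\<lambda>x. nd_accepts D (f x)) \<ge> 1 / real s"
    by (rule reduce_set_nh[OF fl s1 D a])
qed

lemma reduce_dh:
  fixes f :: "bool list \<Rightarrow> bool list"
  assumes fl: "\<forall>x. length x = m \<longrightarrow> length (f x) = l"
  shows "Hdh f m l \<le> Hdh (\<lambda>X. f (take m X) @ drop m X) (m + r) (l + r)"
  unfolding Hdh_def
proof (rule Inf_superset_mono, rule setcomp_mono, elim conjE exE, intro conjI)
  fix s D assume s1: "1 \<le> s" and D: "nd_size D \<le> s" and a: "prob_bits (l + r) (nd_accepts D) \<ge> 1 / real s"
    and b: "prob_bits (m + r) (\<lambda>x. nd_accepts D (f (take m x) @ drop m x)) = 0"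
  show "1 \<le> s" by (rule s1)
  show "\<exists>D. nd_size D \<le> s \<and> prob_bits l (nd_accepts D) \<ge> 1 / real s \<and> prob_bits m (\<lambda>x. nd_accepts D (f x)) = 0"
    by (rule reduce_set_dh[OF fl s1 D a b])
qed

lemma poly_bound:
  fixes p :: "real poly"
  shows "\<exists>A d. A \<ge> 1 \<and> (\<forall>x\<ge>0. poly p x \<le> A * (x + 1) ^ d)"
proof (intro exI conjI allI impI)
  let ?d = "degree p"
  let ?S = "\<Sum>i\<le>?d. \<bar>coeff p i\<bar>"
  show "1 + ?S \<ge> 1" by (simp add: sum_nonneg)
  fix x :: real assume x: "x \<ge> 0"
  have "poly p x = (\<Sum>i\<le>?d. coeff p i * x ^ i)" by (rule poly_altdef)
  also have "\<dots> \<le> (\<Sum>i\<le>?d. \<bar>coeff p i\<bar> * (x + 1) ^ ?d)"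
  proof (rule sum_mono)
    fix i assume i: "i \<in> {..?d}"
    have "x ^ i \<le> (x + 1) ^ i" by (rule power_mono) (use x in auto)
    also have "\<dots> \<le> (x + 1) ^ ?d" by (rule power_increasing) (use i x in auto)
    finally have xi: "x ^ i \<le> (x + 1) ^ ?d" .
    have "coeff p i * x ^ i \<le> \<bar>coeff p i\<bar> * x ^ i"
      using x by (intro mult_right_mono) auto
    also have "\<dots> \<le> \<bar>coeff p i\<bar> * (x + 1) ^ ?d"
      by (rule mult_left_mono[OF xi]) simp
    finally show "coeff p i * x ^ i \<le> \<bar>coeff p i\<bar> * (x + 1) ^ ?d" .
  qed
  also have "\<dots> = ?S * (x + 1) ^ ?d" by (simp add: sum_distrib_right)
  also have "\<dots> \<le> (1 + ?S) * (x + 1) ^ ?d" using x by (intro mult_right_mono) auto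
  finally show "poly p x \<le> (1 + ?S) * (x + 1) ^ ?d" .
qed

definition idx :: "(nat \<Rightarrow> nat) \<Rightarrow> nat \<Rightarrow> nat" where
  "idx ns n = (LEAST j. n < ns (Suc j))"

lemma idx_props:
  assumes sm: "strict_mono ns" and n: "ns 0 \<le> n"
  shows "ns (idx ns n) \<le> n \<and> n < ns (Suc (idx ns n))"
proof -
  have ex: "\<exists>j. n < ns (Suc j)"
  proof
    have "Suc n \<le> ns (Suc n)" using seq_suble[OF sm] .
    then show "n < ns (Suc n)" by simp
  qed
  have 1: "n < ns (Suc (idx ns n))" unfolding idx_def by (rule LeastI_ex[OF ex])
  have 2: "ns (idx ns n) \<le> n"
  proof (cases "idx ns n")
    case 0 then show ?thesis using n by simp
  next
    case (Suc j)
    have "j < idx ns n" using Suc by simp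
    then have "\<not> n < ns (Suc j)" unfolding idx_def by (rule not_less_Least)
    then show ?thesis using Suc by simp
  qed
  show ?thesis using 1 2 by simp
qed

lemma idx_unique:
  assumes sm: "strict_mono ns" and a: "ns i \<le> n" "n < ns (Suc i)"
  shows "idx ns n = i"
proof -
  have n0: "ns 0 \<le> n" using a(1) strict_mono_less_eq[OF sm, of 0 i] by simp
  note p = idx_props[OF sm n0]
  show ?thesis
  proof (rule ccontr)
    assume ne: "idx ns n \<noteq> i"
    show False
    proof (cases "idx ns n < i")
      case True
      then have "ns (Suc (idx ns n)) \<le> ns i" using strict_mono_less_eq[OF sm] by simp
      then show False using p a by simp
    next
      case False
      then have "i < idx ns n" using ne by simp
      then have "ns (Suc i) \<le> ns (idx ns n)" using strict_mono_less_eq[OF sm] by simp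
      then show False using p a by simp
    qed
  qed
qed

lemma growth_bound:
  fixes p :: "real poly"
  assumes sm: "strict_mono ns" and gr: "\<forall>i. real (ns (Suc i)) \<le> poly p (real (ns i))"
    and eps: "\<epsilon> > 0"
  shows "\<exists>\<delta>>0. \<exists>N. \<forall>n\<ge>N. ns 0 \<le> n \<and>
     2 powr (real n powr \<delta>) \<le> 2 powr (real (ns (idx ns n)) powr \<epsilon>)"
proof -
  obtain A d where A: "A \<ge> 1" and pb: "\<forall>x\<ge>0. poly p x \<le> A * (x + 1) ^ d"
    using poly_bound[of p] by blast
  define M where "M = A * 2 ^ d"
  define B where "B = A * (M + 1) ^ d"
  define N where "N = max (ns 0) (nat \<lceil>B\<rceil>)"
  have "(1::real) \<le> 2 ^ d" by (rule one_le_power) simp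
  then have M1: "M \<ge> 1" unfolding M_def using A
    by (metis mult_1_right mult_mono order_trans zero_le_one)
  show ?thesis
  proof (intro exI conjI allI impI)
    show "\<epsilon> / real (d + 1) > 0" using eps by simp
    fix n assume nN: "N \<le> n"
    show n0: "ns 0 \<le> n" using nN by (simp add: N_def)
    define m where "m = ns (idx ns n)"
    note ip = idx_props[OF sm n0]
    have nlt: "real n < A * (real m + 1) ^ d"
    proof -
      have "real n < real (ns (Suc (idx ns n)))" using ip by simp
      also have "\<dots> \<le> poly p (real m)" using gr by (simp add: m_def)
      also have "\<dots> \<le> A * (real m + 1) ^ d" using pb by simp
      finally show ?thesis .
    qed
    have mM: "real m \<ge> M"
    proof (rule ccontr)
      assume "\<not> real m \<ge> M"
      then have "real m + 1 \<le> M + 1" by simp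
      then have "(real m + 1) ^ d \<le> (M + 1) ^ d" by (rule power_mono) simp
      then have "A * (real m + 1) ^ d \<le> B" unfolding B_def using A by simp
      moreover have "B \<le> real n" using nN unfolding N_def by linarith
      ultimately show False using nlt by simp
    qed
    have m1: "real m \<ge> 1" using mM M1 by simp
    have "real n \<le> A * (real m + 1) ^ d" using nlt by simp
    also have "\<dots> \<le> A * (2 * real m) ^ d"
      using m1 A by (intro mult_left_mono power_mono) auto
    also have "\<dots> = M * real m ^ d" by (simp add: M_def power_mult_distrib)
    also have "\<dots> \<le> real m * real m ^ d" using mM by (intro mult_right_mono) auto
    also have "\<dots> = real m ^ (d + 1)" by simp
    finally have nm: "real n \<le> real m ^ (d + 1)" .
    have "real n powr (\<epsilon> / real (d + 1)) \<le> (real m ^ (d + 1)) powr (\<epsilon> / real (d + 1))"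
      using nm eps by (intro powr_mono2) auto
    also have "\<dots> = real m powr \<epsilon>"
    proof -
      have "real m ^ (d + 1) = real m powr real (d + 1)"
        using m1 powr_realpow[of "real m" "d + 1"] by simp
      then have "(real m ^ (d + 1)) powr (\<epsilon> / real (d + 1)) = real m powr (real (d + 1) * (\<epsilon> / real (d + 1)))"
        by (simp add: powr_powr)
      also have "real (d + 1) * (\<epsilon> / real (d + 1)) = \<epsilon>" by simp
      finally show ?thesis .
    qed
    finally have "real n powr (\<epsilon> / real (d + 1)) \<le> real m powr \<epsilon>" .
    then show "2 powr (real n powr (\<epsilon> / real (d + 1))) \<le> 2 powr (real (ns (idx ns n)) powr \<epsilon>)"
      unfolding m_def by simp
  qed
qed

definition Gc :: "nat \<Rightarrow> (nat \<Rightarrow> nat) \<Rightarrow> (nat \<Rightarrow> bool list \<Rightarrow> bool list) \<Rightarrow> nat \<Rightarrow> bool list \<Rightarrow> bool list" where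
  "Gc c ns g n x = (if n < ns 0 then replicate c False @ x
     else g (ns (idx ns n)) (take (ns (idx ns n)) x) @ drop (ns (idx ns n)) x)"

lemma size_arith:
  fixes m n k :: nat
  assumes "m \<le> n"
  shows "m ^ k + k + 1 + (n - m) \<le> n ^ (k + 2) + (k + 2)"
proof -
  have mk: "m ^ k \<le> n ^ k" using assms by (rule power_mono) simp
  have key: "n ^ k + n \<le> n ^ (k + 2) + 1"
  proof (cases "n = 0")
    case True then show ?thesis by (cases k) auto
  next
    case False
    define a where "a = n ^ k"
    have a1: "a \<ge> 1" using False by (simp add: a_def)
    have q1: "n * n \<ge> 1" using False by simp
    obtain a' where a': "a = Suc a'" using a1 by (cases a) auto
    obtain q' where q': "n * n = Suc q'" using q1 by (cases "n * n") auto
    have "a + n * n \<le> a * (n * n) + 1" unfolding a' q' by simp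
    moreover have "n \<le> n * n" using False by simp
    moreover have "n ^ (k + 2) = a * (n * n)" by (simp add: a_def power_add power2_eq_square)
    ultimately show ?thesis unfolding a_def by linarith
  qed
  show ?thesis using mk key by linarith
qed

lemma Gc_gen:
  assumes gen: "is_generator g (\<lambda>n. n + c)" and sm: "strict_mono ns"
  shows "is_generator (Gc c ns g) (\<lambda>n. n + c)"
proof -
  have c0: "\<forall>n. n < n + c" and lens: "\<forall>n x. length x = n \<longrightarrow> length (g n x) = n + c"
    using gen unfolding is_generator_def by blast+
  obtain k where kC: "\<forall>n. \<exists>C. mcirc_size C \<le> n ^ k + k \<and> (\<forall>x. length x = n \<longrightarrow> mcirc_eval C x = g n x)"
    using gen unfolding is_generator_def by blast
  have L: "length (Gc c ns g n x) = n + c" if "length x = n" for n x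
  proof (cases "n < ns 0")
    case True then show ?thesis using that by (simp add: Gc_def)
  next
    case False
    define m where "m = ns (idx ns n)"
    have mn: "m \<le> n" using idx_props[OF sm] False by (simp add: m_def)
    have "length (take m x) = m" using mn that by simp
    then have "length (g m (take m x)) = m + c" using lens by blast
    then show ?thesis using False that mn by (simp add: Gc_def m_def[symmetric])
  qed
  have C: "\<exists>C. mcirc_size C \<le> n ^ (k + 2) + (k + 2) \<and> (\<forall>x. length x = n \<longrightarrow> mcirc_eval C x = Gc c ns g n x)" for n
  proof (cases "n < ns 0")
    case True
    have ev: "mcirc_eval (trc 0 n ([], replicate c 0)) x = Gc c ns g n x" if "length x = n" for x
      using trc_eval[OF that, of 0 "([], replicate c 0)"] True by (simp add: Gc_def mcirc_eval_def)
    have "mcirc_size (trc 0 n ([], replicate c 0)) \<le> n ^ (k + 2) + (k + 2)"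
    proof -
      have "mcirc_size (trc 0 n ([], replicate c 0)) = 1 + n"
        using trc_size[of 0 n "([], replicate c 0)"] by (simp add: mcirc_size_def)
      then show ?thesis using size_arith[of 0 n k] by simp
    qed
    then show ?thesis using ev by blast
  next
    case False
    define m where "m = ns (idx ns n)"
    have mn: "m \<le> n" using idx_props[OF sm] False by (simp add: m_def)
    obtain C0 where C0: "mcirc_size C0 \<le> m ^ k + k" "\<forall>x. length x = m \<longrightarrow> mcirc_eval C0 x = g m x"
      using kC by blast
    have ev: "mcirc_eval (trc m n C0) x = Gc c ns g n x" if "length x = n" for x
      using trc_eval[OF that mn, of C0] C0(2) False mn that by (simp add: Gc_def m_def[symmetric])
    have "mcirc_size (trc m n C0) \<le> n ^ (k + 2) + (k + 2)"
      using size_arith[OF mn, of k] C0(1) trc_size[of m n C0] by linarith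
    then show ?thesis using ev by blast
  qed
  show ?thesis unfolding is_generator_def using c0 L C by blast
qed

lemma Gc_spec:
  fixes g :: "nat \<Rightarrow> bool list \<Rightarrow> bool list"
  assumes sm: "strict_mono ns"
  shows "\<forall>i n x. ns i \<le> n \<longrightarrow> n < ns (Suc i) \<longrightarrow> length x = n \<longrightarrow>
                 Gc c ns g n x = g (ns i) (take (ns i) x) @ drop (ns i) x"
proof (intro allI impI)
  fix i n and x :: "bool list" assume a: "ns i \<le> n" "n < ns (Suc i)" "length x = n"
  have "ns 0 \<le> ns i" using strict_mono_less_eq[OF sm, of 0 i] by simp
  then have "\<not> n < ns 0" using a by simp
  then show "Gc c ns g n x = g (ns i) (take (ns i) x) @ drop (ns i) x"
    using idx_unique[OF sm a(1,2)] by (simp add: Gc_def)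
qed

lemma Gc_eq:
  assumes "\<not> n < ns 0"
  shows "Gc c ns g n = (\<lambda>X. g (ns (idx ns n)) (take (ns (idx ns n)) X) @ drop (ns (idx ns n)) X)"
  using assms by (simp add: Gc_def fun_eq_iff)

theorem lemma2p1:
  fixes c :: nat and g :: "nat \<Rightarrow> bool list \<Rightarrow> bool list"
    and p :: "real poly" and \<epsilon> :: real and ns :: "nat \<Rightarrow> nat"
  assumes gen: "is_generator g (\<lambda>n. n + c)"
    and eps: "\<epsilon> > 0"
    and incr: "strict_mono ns"
    and growth: "\<forall>i. real (ns (Suc i)) \<le> poly p (real (ns i))"
  shows "((\<forall>n \<in> range ns. Hnh (g n) n (n + c) \<ge> ereal (2 powr (real n powr \<epsilon>))) \<longrightarrow>
           (\<exists>G. super_bits G c \<and>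
              (\<forall>i n x. ns i \<le> n \<longrightarrow> n < ns (Suc i) \<longrightarrow> length x = n \<longrightarrow>
                 G n x = g (ns i) (take (ns i) x) @ drop (ns i) x)))
       \<and> ((\<forall>n \<in> range ns. Hdh (g n) n (n + c) \<ge> ereal (2 powr (real n powr \<epsilon>))) \<longrightarrow>
           (\<exists>G. demi_bits G c \<and>
              (\<forall>i n x. ns i \<le> n \<longrightarrow> n < ns (Suc i) \<longrightarrow> length x = n \<longrightarrow>
                 G n x = g (ns i) (take (ns i) x) @ drop (ns i) x)))"
proof -
  have lens: "\<forall>n x. length x = n \<longrightarrow> length (g n x) = n + c"
    using gen unfolding is_generator_def by blast
  obtain \<delta> N where d0: "\<delta> > 0" and dN: "\<forall>n\<ge>N. ns 0 \<le> n \<and>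
     2 powr (real n powr \<delta>) \<le> 2 powr (real (ns (idx ns n)) powr \<epsilon>)"
    using growth_bound[OF incr growth eps] by blast
  have G: "is_generator (Gc c ns g) (\<lambda>n. n + c)" by (rule Gc_gen[OF gen incr])
  have sp: "\<forall>i n x. ns i \<le> n \<longrightarrow> n < ns (Suc i) \<longrightarrow> length x = n \<longrightarrow>
                 Gc c ns g n x = g (ns i) (take (ns i) x) @ drop (ns i) x"
    by (rule Gc_spec[OF incr])
  have common: "\<exists>m. m \<in> range ns \<and> ereal (2 powr (real n powr \<delta>)) \<le> ereal (2 powr (real m powr \<epsilon>))
     \<and> Gc c ns g n = (\<lambda>X. g m (take m X) @ drop m X) \<and> m \<le> n
     \<and> (\<forall>x. length x = m \<longrightarrow> length (g m x) = m + c)" if nN: "N \<le> n" for n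
  proof (intro exI conjI)
    have n0: "ns 0 \<le> n" using dN nN by blast
    show "ns (idx ns n) \<in> range ns" by simp
    show "ereal (2 powr (real n powr \<delta>)) \<le> ereal (2 powr (real (ns (idx ns n)) powr \<epsilon>))"
      using dN nN by simp
    show "Gc c ns g n = (\<lambda>X. g (ns (idx ns n)) (take (ns (idx ns n)) X) @ drop (ns (idx ns n)) X)"
      using n0 by (intro Gc_eq) simp
    show "ns (idx ns n) \<le> n" using idx_props[OF incr n0] by simp
    show "\<forall>x. length x = ns (idx ns n) \<longrightarrow> length (g (ns (idx ns n)) x) = ns (idx ns n) + c"
      using lens by blast
  qed
  show ?thesis
  proof (intro conjI impI)
    assume H: "\<forall>n \<in> range ns. Hnh (g n) n (n + c) \<ge> ereal (2 powr (real n powr \<epsilon>))"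
    have "\<forall>n\<ge>N. Hnh (Gc c ns g n) n (n + c) \<ge> ereal (2 powr (real n powr \<delta>))"
    proof (intro allI impI)
      fix n assume nN: "N \<le> n"
      obtain m where m: "m \<in> range ns" "ereal (2 powr (real n powr \<delta>)) \<le> ereal (2 powr (real m powr \<epsilon>))"
        "Gc c ns g n = (\<lambda>X. g m (take m X) @ drop m X)" "m \<le> n"
        "\<forall>x. length x = m \<longrightarrow> length (g m x) = m + c"
        using common[OF nN] by blast
      have "Hnh (g m) m (m + c) \<le> Hnh (\<lambda>X. g m (take m X) @ drop m X) (m + (n - m)) (m + c + (n - m))"
        by (rule reduce_nh[OF m(5)])
      also have "\<dots> = Hnh (Gc c ns g n) n (n + c)"
        using m(3,4) by (simp add: add.commute)
      finally have "Hnh (g m) m (m + c) \<le> Hnh (Gc c ns g n) n (n + c)" .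
      moreover have "ereal (2 powr (real m powr \<epsilon>)) \<le> Hnh (g m) m (m + c)" using H m(1) by blast
      ultimately show "Hnh (Gc c ns g n) n (n + c) \<ge> ereal (2 powr (real n powr \<delta>))"
        using m(2) by (meson order_trans)
    qed
    then have "super_bits (Gc c ns g) c" unfolding super_bits_def using G d0 by blast
    then show "\<exists>G. super_bits G c \<and>
              (\<forall>i n x. ns i \<le> n \<longrightarrow> n < ns (Suc i) \<longrightarrow> length x = n \<longrightarrow>
                 G n x = g (ns i) (take (ns i) x) @ drop (ns i) x)"
      using sp by blast
  next
    assume H: "\<forall>n \<in> range ns. Hdh (g n) n (n + c) \<ge> ereal (2 powr (real n powr \<epsilon>))"
    have "\<forall>n\<ge>N. Hdh (Gc c ns g n) n (n + c) \<ge> ereal (2 powr (real n powr \<delta>))"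
    proof (intro allI impI)
      fix n assume nN: "N \<le> n"
      obtain m where m: "m \<in> range ns" "ereal (2 powr (real n powr \<delta>)) \<le> ereal (2 powr (real m powr \<epsilon>))"
        "Gc c ns g n = (\<lambda>X. g m (take m X) @ drop m X)" "m \<le> n"
        "\<forall>x. length x = m \<longrightarrow> length (g m x) = m + c"
        using common[OF nN] by blast
      have "Hdh (g m) m (m + c) \<le> Hdh (\<lambda>X. g m (take m X) @ drop m X) (m + (n - m)) (m + c + (n - m))"
        by (rule reduce_dh[OF m(5)])
      also have "\<dots> = Hdh (Gc c ns g n) n (n + c)"
        using m(3,4) by (simp add: add.commute)
      finally have "Hdh (g m) m (m + c) \<le> Hdh (Gc c ns g n) n (n + c)" .
      moreover have "ereal (2 powr (real m powr \<epsilon>)) \<le> Hdh (g m) m (m + c)" using H m(1) by blast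
      ultimately show "Hdh (Gc c ns g n) n (n + c) \<ge> ereal (2 powr (real n powr \<delta>))"
        using m(2) by (meson order_trans)
    qed
    then have "demi_bits (Gc c ns g) c" unfolding demi_bits_def using G d0 by blast
    then show "\<exists>G. demi_bits G c \<and>
              (\<forall>i n x. ns i \<le> n \<longrightarrow> n < ns (Suc i) \<longrightarrow> length x = n \<longrightarrow>
                 G n x = g (ns i) (take (ns i) x) @ drop (ns i) x)"
      using sp by blast
  qed
qed

end
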